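(* Let $\mathcal{H}$ be a real Hilbert space, $N\ge2$, $A_1:\mathcal{H}\rightrightarrows\mathcal{H}$ maximally monotone, and for $\delta,\gamma\in\mathbb{R}_{++}$ define $\tilde{\mathcal{Q}}_{\delta\leftarrow\gamma}=(\tilde{\mathcal{Q}}^1_{\delta\leftarrow\gamma},\dots,\tilde{\mathcal{Q}}^{N-1}_{\delta\leftarrow\gamma}):\mathcal{H}^{N-1}\to\mathcal{H}^{N-1}$ by $\tilde{\mathcal{Q}}^1_{\delta\leftarrow\gamma}\mathbf{x}=\frac{\delta}{\gamma}x^1+(1-\frac{\delta}{\gamma})J_{\gamma A_1}x^1$ and $\tilde{\mathcal{Q}}^i_{\delta\leftarrow\gamma}\mathbf{x}=\frac{\delta}{\gamma}(x^i-x^1)+\tilde{\mathcal{Q}}^1_{\delta\leftarrow\gamma}\mathbf{x}$ for $i=2,\dots,N-1$, where $\mathbf{x}=(x^1,\dots,x^{N-1})$. Then $\tilde{\mathcal{Q}}_{\delta\leftarrow\gamma}$ is Lipschitz continuous (with respect to the product norm on $\mathcal{H}^{N-1}$) with constant $$\check{\mathcal{L}}_{\delta\leftarrow\gamma}=\frac{\sqrt{\delta}}{\sqrt{\gamma}}+\frac{\sqrt{|\gamma-\delta|}}{\sqrt{\gamma}}\max\Big\{\sqrt{N-1},\ \sqrt{2N}\sqrt{\tfrac{\delta}{\gamma}}\Big\}.$$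
   Context: $J_{A}=(\mathrm{Id}+A)^{-1}$ is the resolvent; the norm on $\mathcal{H}^{N-1}$ is $\|\mathbf{x}\|^2=\sum_{i=1}^{N-1}\|x^i\|^2$. *)

theory Defs
  imports "HOL-Analysis.Analysis"
begin

definition monotone_op :: "('a::real_inner \<Rightarrow> 'a set) \<Rightarrow> bool" where
  "monotone_op A \<longleftrightarrow> (\<forall>x y u v. u \<in> A x \<longrightarrow> v \<in> A y \<longrightarrow> inner (x - y) (u - v) \<ge> 0)"

definition maximal_monotone :: "('a::real_inner \<Rightarrow> 'a set) \<Rightarrow> bool" where
  "maximal_monotone A \<longleftrightarrow> monotone_op A \<and>
     (\<forall>B. monotone_op B \<longrightarrow> (\<forall>x. A x \<subseteq> B x) \<longrightarrow> B = A)"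

text \<open>Resolvent J_{gamma A} = (Id + gamma A)^{-1}: p = J x iff x \<in> p + gamma A p.
  For maximally monotone A and gamma > 0 this is single-valued with full domain (Minty).\<close>
definition resolvent :: "real \<Rightarrow> ('a::real_inner \<Rightarrow> 'a set) \<Rightarrow> 'a \<Rightarrow> 'a" where
  "resolvent g A x = (THE p. x \<in> (\<lambda>u. p + g *\<^sub>R u) ` A p)"

text \<open>Elements of H^{N-1} are functions nat \<Rightarrow> 'a, of which only indices 1..N-1 matter.\<close>
definition prod_norm :: "nat \<Rightarrow> (nat \<Rightarrow> 'a::real_normed_vector) \<Rightarrow> real" where
  "prod_norm N x = sqrt (\<Sum>i=1..N-1. (norm (x i))\<^sup>2)"

definition Q1 :: "real \<Rightarrow> real \<Rightarrow> ('a::real_inner \<Rightarrow> 'a set) \<Rightarrow> (nat \<Rightarrow> 'a) \<Rightarrow> 'a" where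
  "Q1 d g A x = (d / g) *\<^sub>R x 1 + (1 - d / g) *\<^sub>R resolvent g A (x 1)"

definition Qtilde :: "real \<Rightarrow> real \<Rightarrow> ('a::real_inner \<Rightarrow> 'a set) \<Rightarrow> (nat \<Rightarrow> 'a) \<Rightarrow> (nat \<Rightarrow> 'a)" where
  "Qtilde d g A x = (\<lambda>i. if i = 1 then Q1 d g A x
                          else (d / g) *\<^sub>R (x i - x 1) + Q1 d g A x)"

end

theory Submission
  imports Defs
begin

lemma alg_double:
  fixes a b :: "'i \<Rightarrow> 'a::real_inner"
  assumes T: "finite T" and u1: "sum u T = 1"
  shows "(\<Sum>v\<in>T. u v * inner (a v) (b v)) - inner (\<Sum>v\<in>T. u v *\<^sub>R a v) (\<Sum>v\<in>T. u v *\<^sub>R b v)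
       = (1/2) * (\<Sum>v\<in>T. \<Sum>y\<in>T. u v * u y * inner (a v - a y) (b v - b y))"
proof -
  have s1: "(\<Sum>v\<in>T. \<Sum>y\<in>T. u v * u y * inner (a v) (b v)) = (\<Sum>v\<in>T. u v * inner (a v) (b v))"
    by (simp add: sum_distrib_left[symmetric] sum_distrib_right[symmetric] u1 mult.commute mult.left_commute)
  have s2: "(\<Sum>v\<in>T. \<Sum>y\<in>T. u v * u y * inner (a y) (b y)) = (\<Sum>v\<in>T. u v * inner (a v) (b v))"
    by (simp add: mult.assoc sum_distrib_left[symmetric] sum_distrib_right[symmetric] u1)
  have s3: "(\<Sum>v\<in>T. \<Sum>y\<in>T. u v * u y * inner (a v) (b y)) = inner (\<Sum>v\<in>T. u v *\<^sub>R a v) (\<Sum>v\<in>T. u v *\<^sub>R b v)"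
    apply (subst sum.swap)
    by (simp add: inner_sum_left inner_sum_right mult.assoc sum_distrib_left mult.left_commute)
  have s4: "(\<Sum>v\<in>T. \<Sum>y\<in>T. u v * u y * inner (a y) (b v)) = inner (\<Sum>v\<in>T. u v *\<^sub>R a v) (\<Sum>v\<in>T. u v *\<^sub>R b v)"
    by (simp add: inner_sum_left inner_sum_right mult.assoc sum_distrib_left mult.left_commute)
  have "(\<Sum>v\<in>T. \<Sum>y\<in>T. u v * u y * inner (a v - a y) (b v - b y))
     = (\<Sum>v\<in>T. \<Sum>y\<in>T. u v * u y * inner (a v) (b v)) + (\<Sum>v\<in>T. \<Sum>y\<in>T. u v * u y * inner (a y) (b y))
      - (\<Sum>v\<in>T. \<Sum>y\<in>T. u v * u y * inner (a v) (b y)) - (\<Sum>v\<in>T. \<Sum>y\<in>T. u v * u y * inner (a y) (b v))"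
    by (simp add: inner_diff_left inner_diff_right algebra_simps sum.distrib sum_subtractf)
  then show ?thesis using s1 s2 s3 s4 by simp
qed

lemma alg_main:
  fixes a b :: "'i \<Rightarrow> 'a::real_inner"
  assumes T: "finite T" and u0: "\<forall>v\<in>T. u v \<ge> 0" and u1: "sum u T = 1"
    and mono: "\<forall>v\<in>T. \<forall>y\<in>T. inner (a v - a y) (b v - b y) \<ge> 0"
    and p: "p = (\<Sum>v\<in>T. u v *\<^sub>R ((1/2) *\<^sub>R (a v + z - b v)))"
  shows "(\<Sum>v\<in>T. u v * inner (p - a v) (z - p - b v)) \<ge> 0"
proof -
  define A where "A = (\<Sum>v\<in>T. u v *\<^sub>R a v)"
  define B where "B = (\<Sum>v\<in>T. u v *\<^sub>R b v)"
  have zz: "(\<Sum>v\<in>T. u v *\<^sub>R z) = z" using u1 by (simp add: scaleR_sum_left[symmetric])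
  have pA: "p = (1/2) *\<^sub>R (A + z - B)"
  proof -
    have "p = (1/2) *\<^sub>R (\<Sum>v\<in>T. u v *\<^sub>R a v + u v *\<^sub>R z - u v *\<^sub>R b v)"
      by (simp add: p scaleR_sum_right algebra_simps)
    also have "\<dots> = (1/2) *\<^sub>R (A + (\<Sum>v\<in>T. u v *\<^sub>R z) - B)"
      by (simp add: A_def B_def sum.distrib sum_subtractf)
    finally show ?thesis using zz by simp
  qed
  have e1: "(\<Sum>v\<in>T. u v * inner (p - a v) (z - p - b v))
      = inner p (z - p) - inner p B - inner A (z - p) + (\<Sum>v\<in>T. u v * inner (a v) (b v))"
  proof -
    have "(\<Sum>v\<in>T. u v * inner (p - a v) (z - p - b v))
      = (\<Sum>v\<in>T. u v * inner p (z - p)) - (\<Sum>v\<in>T. u v * inner p (b v)) - (\<Sum>v\<in>T. u v * inner (a v) (z - p))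
        + (\<Sum>v\<in>T. u v * inner (a v) (b v))"
      by (simp add: inner_diff_left inner_diff_right algebra_simps sum.distrib sum_subtractf)
    also have "\<dots> = inner p (z - p) - inner p B - inner A (z - p) + (\<Sum>v\<in>T. u v * inner (a v) (b v))"
      by (simp add: A_def B_def inner_sum_left inner_sum_right sum_distrib_right[symmetric] u1)
    finally show ?thesis .
  qed
  have e2: "inner p (z - p) - inner p B - inner A (z - p) = (norm ((1/2) *\<^sub>R (z - A - B)))\<^sup>2 - inner A B"
    unfolding pA by (simp add: power2_norm_eq_inner inner_simps inner_commute algebra_simps; simp add: field_simps)
  have e3: "(\<Sum>v\<in>T. \<Sum>y\<in>T. u v * u y * inner (a v - a y) (b v - b y)) \<ge> 0"
    using mono u0 by (intro sum_nonneg) (simp add: mult_nonneg_nonneg)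
  have "0 \<le> (norm ((1/2) *\<^sub>R (z - A - B)))\<^sup>2" by simp
  then show ?thesis
    using e1 e2 e3 alg_double[OF T u1, of a b] unfolding A_def[symmetric] B_def[symmetric]
    by linarith
qed

definition cen :: "'a::real_inner \<Rightarrow> 'a \<times> 'a \<Rightarrow> 'a" where
  "cen z e = (1/2) *\<^sub>R (fst e + z - snd e)"
definition rad :: "'a::real_inner \<Rightarrow> 'a \<times> 'a \<Rightarrow> real" where
  "rad z e = norm (z - fst e - snd e) / 2"

lemma cen_rad_id:
  "(norm (p - cen z e))\<^sup>2 - (rad z e)\<^sup>2 = - inner (p - fst e) (z - p - snd e)"
  unfolding cen_def rad_def
  by (simp add: power2_norm_eq_inner inner_simps inner_commute algebra_simps power_divide; simp add: field_simps)

lemma norm_sq_shift: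
  fixes p w c :: "'a::real_inner"
  shows "(norm (p - t *\<^sub>R w - c))\<^sup>2 = (norm (p - c))\<^sup>2 - 2 * t * inner (p - c) w + t\<^sup>2 * (norm w)\<^sup>2"
  unfolding power2_norm_eq_inner by (simp add: inner_simps inner_commute algebra_simps power2_eq_square)

lemma cont_Max_fam:
  fixes h :: "'e \<Rightarrow> 'a::topological_space \<Rightarrow> real"
  assumes "finite S" "S \<noteq> {}" "\<And>e. e \<in> S \<Longrightarrow> continuous_on UNIV (h e)"
  shows "continuous_on UNIV (\<lambda>p. Max ((\<lambda>e. h e p) ` S))"
  using assms
proof (induction S rule: finite_ne_induct)
  case (singleton x)
  then show ?case by simp
next
  case (insert x F)
  have "(\<lambda>p. Max ((\<lambda>e. h e p) ` insert x F)) = (\<lambda>p. max (h x p) (Max ((\<lambda>e. h e p) ` F)))"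
    using insert.hyps by (simp add: Max_insert)
  then show ?case using insert by (auto intro!: continuous_on_max)
qed

lemma ev01: "eventually (\<lambda>t::real. 0 < t \<and> t < 1) (at_right 0)"
  unfolding eventually_at_right_field by (intro exI[of _ 1]) auto

lemma finite_case:
  fixes z :: "'a::real_inner" and S :: "('a \<times> 'a) set"
  assumes mono: "\<forall>e\<in>S. \<forall>e'\<in>S. inner (fst e - fst e') (snd e - snd e') \<ge> 0"
    and fin: "finite S" and ne: "S \<noteq> {}"
  shows "\<exists>p. \<forall>e\<in>S. inner (p - fst e) (z - p - snd e) \<ge> 0"
proof -
  define hh where "hh e p = (norm (p - cen z e))\<^sup>2 - (rad z e)\<^sup>2" for e p
  define F where "F p = Max ((\<lambda>e. hh e p) ` S)" for p
  define C where "C = convex hull (cen z ` S)"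
  have Cc: "compact C" unfolding C_def using fin by (simp add: finite_imp_compact_convex_hull)
  have Cne: "C \<noteq> {}" unfolding C_def using ne by simp
  have Ccv: "convex C" unfolding C_def by simp
  have contF: "continuous_on UNIV F"
    unfolding F_def[abs_def] using fin ne
    by (intro cont_Max_fam) (auto simp: hh_def intro!: continuous_intros)
  obtain p0 where p0C: "p0 \<in> C" and p0min: "\<forall>y\<in>C. F p0 \<le> F y"
    using continuous_attains_inf[OF Cc Cne continuous_on_subset[OF contF]] by auto
  define \<mu> where "\<mu> = F p0"
  define I where "I = {e\<in>S. hh e p0 = \<mu>}"
  have hle: "hh e p0 \<le> \<mu>" if "e \<in> S" for e
    unfolding \<mu>_def F_def using fin that by (intro Max_ge) auto
  have "\<mu> \<in> (\<lambda>e. hh e p0) ` S" unfolding \<mu>_def F_def using fin ne by (intro Max_in) auto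
  then have Ine: "I \<noteq> {}" unfolding I_def by auto
  have Ifin: "finite I" unfolding I_def using fin by simp
  have IS: "I \<subseteq> S" unfolding I_def by auto
  define D where "D = convex hull (cen z ` I)"
  have Dc: "compact D" unfolding D_def using Ifin by (simp add: finite_imp_compact_convex_hull)
  have Dne: "D \<noteq> {}" unfolding D_def using Ine by simp
  have Dcv: "convex D" unfolding D_def by simp
  have DC: "D \<subseteq> C" unfolding D_def C_def using IS by (intro hull_mono) auto
  have "continuous_on D (\<lambda>y. norm (p0 - y))" by (intro continuous_intros)
  then obtain y0 where y0D: "y0 \<in> D" and y0min: "\<forall>y\<in>D. norm (p0 - y0) \<le> norm (p0 - y)"
    using continuous_attains_inf[OF Dc Dne, of "\<lambda>y. norm (p0 - y)"] by blast
  have dot: "inner (p0 - y0) (cen z e - y0) \<le> 0" if "e \<in> I" for e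
  proof -
    have "cen z e \<in> D" unfolding D_def using that by (intro hull_inc) auto
    then show ?thesis
      using any_closest_point_dot[OF Dcv compact_imp_closed[OF Dc] y0D, of "cen z e" p0] y0min
      by (simp add: dist_norm)
  qed
  define w where "w = p0 - y0"
  have w0: "w = 0"
  proof (rule ccontr)
    assume wne: "w \<noteq> 0"
    have act: "hh e (p0 - t *\<^sub>R w) < \<mu>" if "e \<in> I" "0 < t" "t \<le> 1" for e t
    proof -
      have "inner (p0 - cen z e) w = inner w w - inner (cen z e - y0) w"
        unfolding w_def by (simp add: inner_simps)
      also have "\<dots> \<ge> (norm w)\<^sup>2" using dot[OF that(1)] unfolding w_def
        by (simp add: power2_norm_eq_inner inner_commute)
      finally have c: "inner (p0 - cen z e) w \<ge> (norm w)\<^sup>2" .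
      have nw: "(norm w)\<^sup>2 > 0" using wne by simp
      have "hh e (p0 - t *\<^sub>R w) = hh e p0 - 2 * t * inner (p0 - cen z e) w + t\<^sup>2 * (norm w)\<^sup>2"
        unfolding hh_def by (simp add: norm_sq_shift)
      also have "\<dots> \<le> \<mu> - 2 * t * (norm w)\<^sup>2 + t\<^sup>2 * (norm w)\<^sup>2"
        using c that IS hle[of e] unfolding I_def by (auto intro!: mult_left_mono)
      also have "\<dots> < \<mu>"
      proof -
        have "t\<^sup>2 * (norm w)\<^sup>2 \<le> t * (norm w)\<^sup>2"
          using that nw by (intro mult_right_mono) (auto simp: power2_eq_square)
        moreover have "t * (norm w)\<^sup>2 > 0" using that nw by simp
        ultimately show ?thesis by linarith
      qed
      finally show ?thesis .
    qed
    have ev: "eventually (\<lambda>t. hh e (p0 - t *\<^sub>R w) < \<mu> \<and> 0 < t \<and> t \<le> 1) (at_right 0)"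
      if "e \<in> S" for e
    proof (cases "e \<in> I")
      case True
      have "eventually (\<lambda>t::real. 0 < t \<and> t < 1) (at_right 0)"
        by (rule ev01)
      then show ?thesis by eventually_elim (use act[OF True] in auto)
    next
      case False
      then have lt: "hh e p0 < \<mu>" using hle[OF that] that unfolding I_def by auto
      have tl: "((\<lambda>t. hh e p0 - 2 * t * inner (p0 - cen z e) w + t\<^sup>2 * (norm w)\<^sup>2)
             \<longlongrightarrow> hh e p0 - 2 * 0 * inner (p0 - cen z e) w + 0\<^sup>2 * (norm w)\<^sup>2) (at_right 0)"
        by (intro tendsto_intros)
      have "eventually (\<lambda>t. hh e p0 - 2 * t * inner (p0 - cen z e) w + t\<^sup>2 * (norm w)\<^sup>2 < \<mu>) (at_right 0)"
        using order_tendstoD(2)[OF tl] lt by simp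
      moreover have "eventually (\<lambda>t::real. 0 < t \<and> t < 1) (at_right 0)"
        by (rule ev01)
      ultimately show ?thesis
        by eventually_elim (auto simp: hh_def norm_sq_shift)
    qed
    have "eventually (\<lambda>t. \<forall>e\<in>S. hh e (p0 - t *\<^sub>R w) < \<mu> \<and> 0 < t \<and> t \<le> 1) (at_right 0)"
      using ev fin by (intro eventually_ball_finite) auto
    then obtain t where t: "\<forall>e\<in>S. hh e (p0 - t *\<^sub>R w) < \<mu> \<and> 0 < t \<and> t \<le> 1"
      using eventually_happens[of _ "at_right (0::real)"] by (auto simp: trivial_limit_at_right_real)
    have t01: "0 < t" "t \<le> 1" using t ne by auto
    have "p0 - t *\<^sub>R w = (1 - t) *\<^sub>R p0 + t *\<^sub>R y0" unfolding w_def by (simp add: algebra_simps)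
    also have "\<dots> \<in> C" using Ccv p0C DC y0D t01 by (intro convexD) auto
    finally have inC: "p0 - t *\<^sub>R w \<in> C" .
    have "F (p0 - t *\<^sub>R w) < \<mu>" unfolding F_def using fin ne t by (subst Max_less_iff) auto
    then show False using p0min inC unfolding \<mu>_def by force
  qed
  then have "p0 \<in> D" using y0D unfolding w_def by simp
  then have "\<exists>T u. finite T \<and> T \<subseteq> cen z ` I \<and> (\<forall>x\<in>T. 0 \<le> u x) \<and> sum u T = 1 \<and> (\<Sum>v\<in>T. u v *\<^sub>R v) = p0"
    unfolding D_def convex_hull_explicit by (simp only: mem_Collect_eq)
  then obtain T u where T0: "finite T \<and> T \<subseteq> cen z ` I \<and> (\<forall>x\<in>T. 0 \<le> u x) \<and> sum u T = 1 \<and> (\<Sum>v\<in>T. u v *\<^sub>R v) = p0"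
    by (elim exE) blast
  have T: "finite T" "T \<subseteq> cen z ` I" "\<forall>x\<in>T. 0 \<le> u x" "sum u T = 1"
      "(\<Sum>v\<in>T. u v *\<^sub>R v) = p0" using T0 by simp_all
  define f where "f v = (SOME e. e \<in> I \<and> cen z e = v)" for v
  have f: "f v \<in> I \<and> cen z (f v) = v" if "v \<in> T" for v
  proof -
    have "v \<in> cen z ` I" using T(2) that by blast
    then obtain e where "e \<in> I" "v = cen z e" by (rule imageE)
    then have "\<exists>e. e \<in> I \<and> cen z e = v" by blast
    then show ?thesis unfolding f_def by (rule someI_ex)
  qed
  have p0eq: "p0 = (\<Sum>v\<in>T. u v *\<^sub>R ((1/2) *\<^sub>R (fst (f v) + z - snd (f v))))"
  proof -
    have "(\<Sum>v\<in>T. u v *\<^sub>R v) = (\<Sum>v\<in>T. u v *\<^sub>R ((1/2) *\<^sub>R (fst (f v) + z - snd (f v))))"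
    proof (rule sum.cong)
      fix v assume "v \<in> T"
      then have "cen z (f v) = v" using f by blast
      then show "u v *\<^sub>R v = u v *\<^sub>R ((1/2) *\<^sub>R (fst (f v) + z - snd (f v)))"
        unfolding cen_def by simp
    qed simp
    then show ?thesis using T(5) by simp
  qed
  have monoT: "\<forall>v\<in>T. \<forall>y\<in>T. inner (fst (f v) - fst (f y)) (snd (f v) - snd (f y)) \<ge> 0"
  proof (intro ballI)
    fix v y assume "v \<in> T" "y \<in> T"
    then have "f v \<in> S" "f y \<in> S" using f IS by blast+
    then show "inner (fst (f v) - fst (f y)) (snd (f v) - snd (f y)) \<ge> 0" using mono by blast
  qed
  have s0: "(\<Sum>v\<in>T. u v * inner (p0 - fst (f v)) (z - p0 - snd (f v))) \<ge> 0"
    by (rule alg_main[OF T(1) T(3) T(4) monoT p0eq])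
  have s1: "(\<Sum>v\<in>T. u v * inner (p0 - fst (f v)) (z - p0 - snd (f v))) = (\<Sum>v\<in>T. u v * (- \<mu>))"
  proof (rule sum.cong)
    fix v assume "v \<in> T"
    then have "hh (f v) p0 = \<mu>" using f unfolding I_def by blast
    then have "inner (p0 - fst (f v)) (z - p0 - snd (f v)) = - \<mu>"
      using cen_rad_id[of p0 z "f v"] unfolding hh_def by linarith
    then show "u v * inner (p0 - fst (f v)) (z - p0 - snd (f v)) = u v * (- \<mu>)" by simp
  qed simp
  have "(\<Sum>v\<in>T. u v * (- \<mu>)) = - \<mu>" using T(4) by (simp add: sum_negf sum_distrib_right[symmetric])
  then have mu0: "\<mu> \<le> 0" using s0 s1 by linarith
  have "\<forall>e\<in>S. inner (p0 - fst e) (z - p0 - snd e) \<ge> 0"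
  proof
    fix e assume "e \<in> S"
    then have "hh e p0 \<le> 0" using hle mu0 by fastforce
    then show "inner (p0 - fst e) (z - p0 - snd e) \<ge> 0"
      using cen_rad_id[of p0 z e] unfolding hh_def by linarith
  qed
  then show ?thesis by blast
qed

lemma ball_iff:
  "inner (p - fst e) (z - p - snd e) \<ge> 0 \<longleftrightarrow> dist (cen z e) p \<le> rad z e"
proof -
  have r0: "rad z e \<ge> 0" unfolding rad_def by simp
  have "dist (cen z e) p \<le> rad z e \<longleftrightarrow> (norm (p - cen z e))\<^sup>2 \<le> (rad z e)\<^sup>2"
    using r0 by (simp add: dist_norm norm_minus_commute abs_le_square_iff[symmetric])
  then show ?thesis using cen_rad_id[of p z e] by linarith
qed

lemma parallel_bound:
  fixes p q :: "'a::real_inner"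
  assumes "(norm ((1/2) *\<^sub>R (p + q))) \<ge> d" "d \<ge> 0"
  shows "(norm (p - q))\<^sup>2 \<le> 2 * (norm p)\<^sup>2 + 2 * (norm q)\<^sup>2 - 4 * d\<^sup>2"
proof -
  have par: "(norm (p - q))\<^sup>2 + (norm (p + q))\<^sup>2 = 2 * (norm p)\<^sup>2 + 2 * (norm q)\<^sup>2"
    unfolding power2_norm_eq_inner by (simp add: inner_simps inner_commute)
  have "norm (p + q) = 2 * norm ((1/2) *\<^sub>R (p + q))" by simp
  then have "norm (p + q) \<ge> 2 * d" using assms by linarith
  then have "(norm (p + q))\<^sup>2 \<ge> (2 * d)\<^sup>2" using assms(2) by (intro power_mono) auto
  then show ?thesis using par by (simp add: power_mult_distrib)
qed

lemma real_bound16: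
  fixes R e a b dl :: real
  assumes "0 \<le> R" "0 < e" "e \<le> 1" "a \<le> R + e" "b \<le> R + e" "0 \<le> a" "0 \<le> b" "dl \<ge> R - e" "dl \<ge> 0"
  shows "2 * a\<^sup>2 + 2 * b\<^sup>2 - 4 * dl\<^sup>2 \<le> 16 * (R + 1) * e"
proof -
  have "a\<^sup>2 \<le> (R + e)\<^sup>2" "b\<^sup>2 \<le> (R + e)\<^sup>2" using assms by (auto intro!: power_mono)
  moreover have "dl\<^sup>2 \<ge> (max 0 (R - e))\<^sup>2" using assms by (intro power_mono) auto
  moreover have "4 * (R + e)\<^sup>2 - 4 * (max 0 (R - e))\<^sup>2 \<le> 16 * (R + 1) * e"
  proof (cases "R \<ge> e")
    case True
    then show ?thesis using assms by (simp add: power2_eq_square algebra_simps)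
  next
    case False
    then have A: "(R + e)\<^sup>2 \<le> (2 * e)\<^sup>2" using assms by (intro power_mono) auto
    have B: "e\<^sup>2 \<le> e" using assms by (simp add: power2_eq_square mult_left_le)
    have "4 * (R + e)\<^sup>2 - 4 * (max 0 (R - e))\<^sup>2 = 4 * (R + e)\<^sup>2" using False by simp
    also have "\<dots> \<le> 16 * e\<^sup>2" using A by (simp add: power_mult_distrib)
    also have "\<dots> \<le> 16 * e" using B by simp
    also have "\<dots> \<le> 16 * (R + 1) * e" using assms by (simp add: algebra_simps)
    finally show ?thesis .
  qed
  ultimately show ?thesis by linarith
qed

lemma monotone_extension_point:
  fixes z :: "'a::{real_inner, complete_space}" and G :: "('a \<times> 'a) set"
  assumes mono: "\<forall>e\<in>G. \<forall>e'\<in>G. inner (fst e - fst e') (snd e - snd e') \<ge> 0"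
    and Gne: "G \<noteq> {}"
  shows "\<exists>p. \<forall>e\<in>G. inner (p - fst e) (z - p - snd e) \<ge> 0"
proof -
  define Fin where "Fin = {S. finite S \<and> S \<subseteq> G}"
  define K where "K S = (\<Inter>e\<in>S. cball (cen z e) (rad z e))" for S
  define dl where "dl S = Inf (norm ` K S)" for S
  have Kmem: "p \<in> K S \<longleftrightarrow> (\<forall>e\<in>S. inner (p - fst e) (z - p - snd e) \<ge> 0)" for p S
    unfolding K_def by (simp add: ball_iff)
  have Kne: "K S \<noteq> {}" if SF: "S \<in> Fin" for S
  proof (cases "S = {}")
    case True then show ?thesis unfolding K_def by simp
  next
    case False
    have "\<forall>e\<in>S. \<forall>e'\<in>S. inner (fst e - fst e') (snd e - snd e') \<ge> 0" using mono SF unfolding Fin_def by blast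
    moreover have "finite S" using SF unfolding Fin_def by blast
    ultimately obtain p where "\<forall>e\<in>S. inner (p - fst e) (z - p - snd e) \<ge> 0"
      using finite_case[of S z] False by blast
    then show ?thesis using Kmem by blast
  qed
  have Kcv: "convex (K S)" for S unfolding K_def by (intro convex_INT) simp
  have Kanti: "S \<subseteq> S' \<Longrightarrow> K S' \<subseteq> K S" for S S' unfolding K_def by blast
  have bb: "bdd_below (norm ` K S)" for S by (rule bdd_belowI[of _ 0]) auto
  have dl_le: "dl S \<le> norm p" if "p \<in> K S" for S p
    unfolding dl_def using that bb by (intro cInf_lower) auto
  have dl_ge0: "dl S \<ge> 0" if "S \<in> Fin" for S
    unfolding dl_def using Kne[OF that] by (intro cInf_greatest) auto
  have dl_approx: "\<exists>p\<in>K S. norm p < dl S + e" if "S \<in> Fin" "e > 0" for S e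
  proof -
    have "Inf (norm ` K S) < dl S + e" unfolding dl_def using that by simp
    then show ?thesis using cInf_less_iff[of "norm ` K S"] Kne[OF that(1)] bb by auto
  qed
  have dl_mono: "dl S \<le> dl S'" if "S \<subseteq> S'" "S' \<in> Fin" for S S'
    unfolding dl_def[of S'] using Kne[OF that(2)] dl_le Kanti[OF that(1)]
    by (intro cInf_greatest) auto
  obtain e0 where e0: "e0 \<in> G" using Gne by blast
  define M where "M = norm (cen z e0) + rad z e0"
  have dlM: "dl S \<le> M" if "S \<in> Fin" for S
  proof -
    have ins: "insert e0 S \<in> Fin" using that e0 unfolding Fin_def by auto
    obtain p where p: "p \<in> K (insert e0 S)" using Kne[OF ins] by blast
    then have "dist (cen z e0) p \<le> rad z e0" unfolding K_def by auto
    then have "norm p \<le> M" unfolding M_def dist_norm using norm_triangle_ineq2[of p "cen z e0"]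
      by (simp add: norm_minus_commute)
    moreover have "dl S \<le> norm p" using p Kanti[of S "insert e0 S"] dl_le by blast
    ultimately show ?thesis by simp
  qed
  have Finne: "Fin \<noteq> {}" unfolding Fin_def by blast
  have ba: "bdd_above (dl ` Fin)" using dlM by (intro bdd_aboveI[of _ M]) auto
  define R where "R = Sup (dl ` Fin)"
  have dlR: "dl S \<le> R" if "S \<in> Fin" for S unfolding R_def using that ba by (intro cSup_upper) auto
  have R0: "R \<ge> 0" using dlR[of "{}"] dl_ge0[of "{}"] unfolding Fin_def by auto
  have Rapprox: "\<exists>S\<in>Fin. dl S > R - e" if "e > 0" for e
  proof -
    have "R - e < Sup (dl ` Fin)" unfolding R_def[symmetric] using that by simp
    then show ?thesis using less_cSup_iff[of "dl ` Fin"] Finne ba by auto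
  qed
  define ep where "ep n = inverse (real (Suc n))" for n
  have ep_pos: "ep n > 0" for n unfolding ep_def by simp
  have ep_le1: "ep n \<le> 1" for n unfolding ep_def by (simp add: inverse_le_1_iff)
  have ep_anti: "ep m \<le> ep n" if "n \<le> m" for m n unfolding ep_def using that
    by (simp add: le_imp_inverse_le)
  have ep_lim: "ep \<longlonglongrightarrow> 0" unfolding ep_def by (rule LIMSEQ_inverse_real_of_nat)
  have "\<forall>n. \<exists>S. S \<in> Fin \<and> dl S > R - ep n" using Rapprox ep_pos by blast
  from choice[OF this] obtain S where S: "\<forall>n. S n \<in> Fin \<and> dl (S n) > R - ep n" by blast
  define T where "T n = (\<Union>k\<le>n. S k)" for n
  have TF: "T n \<in> Fin" for n unfolding T_def Fin_def using S unfolding Fin_def by auto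
  have Tmono: "T n \<subseteq> T m" if "n \<le> m" for n m unfolding T_def using that by (intro UN_mono) auto
  have Tdl: "dl (T n) > R - ep n" for n
  proof -
    have "S n \<subseteq> T n" unfolding T_def by auto
    then have "dl (S n) \<le> dl (T n)" using dl_mono TF by blast
    then show ?thesis using S by (meson less_le_trans)
  qed
  have key: "(norm (p - q))\<^sup>2 \<le> 16 * (R + 1) * ep n"
    if "p \<in> K (T n)" "q \<in> K (T n)" "norm p \<le> R + ep n" "norm q \<le> R + ep n" for p q n
  proof -
    have "(1/2) *\<^sub>R (p + q) \<in> K (T n)"
      using convexD[OF Kcv that(1) that(2), of "1/2" "1/2"] by (simp add: algebra_simps)
    then have "norm ((1/2) *\<^sub>R (p + q)) \<ge> dl (T n)" by (rule dl_le)
    then have "(norm (p - q))\<^sup>2 \<le> 2 * (norm p)\<^sup>2 + 2 * (norm q)\<^sup>2 - 4 * (dl (T n))\<^sup>2"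
      using dl_ge0[OF TF] by (intro parallel_bound) auto
    also have "\<dots> \<le> 16 * (R + 1) * ep n"
      using R0 ep_pos[of n] ep_le1[of n] that Tdl[of n] dl_ge0[OF TF[of n]]
      by (intro real_bound16) auto
    finally show ?thesis .
  qed
  have pick: "\<exists>p\<in>K U. norm p \<le> R + ep n" if "U \<in> Fin" for U n
    using dl_approx[OF that ep_pos[of n]] dlR[OF that] by force
  have "\<forall>n. \<exists>p. p \<in> K (T n) \<and> norm p \<le> R + ep n" using pick[OF TF] by blast
  from choice[OF this] obtain pp where pp: "\<forall>n. pp n \<in> K (T n) \<and> norm (pp n) \<le> R + ep n" by blast
  have smallev: "eventually (\<lambda>n. 16 * (R + 1) * ep n < e\<^sup>2) sequentially" if "e > 0" for e
  proof -
    have "(\<lambda>n. 16 * (R + 1) * ep n) \<longlonglongrightarrow> 16 * (R + 1) * 0"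
      by (intro tendsto_intros ep_lim)
    then show ?thesis using that by (intro order_tendstoD(2)) auto
  qed
  have "Cauchy pp"
  proof (rule metric_CauchyI)
    fix e :: real assume e: "e > 0"
    obtain N0 where N0: "\<forall>n\<ge>N0. 16 * (R + 1) * ep n < e\<^sup>2"
      using smallev[OF e] unfolding eventually_sequentially by blast
    then have N: "16 * (R + 1) * ep N0 < e\<^sup>2" by blast
    define N where "N = N0"
    note N = N[folded N_def]
    have "dist (pp m) (pp n) < e" if "m \<ge> N" "n \<ge> N" for m n
    proof -
      have m1: "pp m \<in> K (T N)" using pp Kanti[OF Tmono[OF that(1)]] by blast
      have n1: "pp n \<in> K (T N)" using pp Kanti[OF Tmono[OF that(2)]] by blast
      have m2: "norm (pp m) \<le> R + ep N" using pp[rule_format, of m] ep_anti[OF that(1)] by linarith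
      have n2: "norm (pp n) \<le> R + ep N" using pp[rule_format, of n] ep_anti[OF that(2)] by linarith
      have "(norm (pp m - pp n))\<^sup>2 < e\<^sup>2" using key[OF m1 n1 m2 n2] N by linarith
      then show ?thesis using e by (simp add: dist_norm power_less_imp_less_base)
    qed
    then show "\<exists>M. \<forall>m\<ge>M. \<forall>n\<ge>M. dist (pp m) (pp n) < e" by blast
  qed
  then obtain pb where pb: "pp \<longlonglongrightarrow> pb" using Cauchy_convergent_iff convergent_def by blast
  have "\<forall>e\<in>G. dist (cen z e) pb \<le> rad z e"
  proof
    fix e assume eG: "e \<in> G"
    have UF: "insert e (T n) \<in> Fin" for n using TF eG unfolding Fin_def by auto
    have "\<forall>n. \<exists>p. p \<in> K (insert e (T n)) \<and> norm p \<le> R + ep n" using pick[OF UF] by blast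
    from choice[OF this] obtain qq where qq: "\<forall>n. qq n \<in> K (insert e (T n)) \<and> norm (qq n) \<le> R + ep n" by blast
    have close: "norm (qq n - pp n) \<le> sqrt (16 * (R + 1) * ep n)" for n
    proof -
      have "qq n \<in> K (T n)" using qq Kanti[of "T n" "insert e (T n)"] by blast
      then have "(norm (qq n - pp n))\<^sup>2 \<le> 16 * (R + 1) * ep n"
        using key[of "qq n" n "pp n"] qq pp by blast
      then show ?thesis using real_le_rsqrt by blast
    qed
    have "(\<lambda>n. sqrt (16 * (R + 1) * ep n)) \<longlonglongrightarrow> sqrt (16 * (R + 1) * 0)"
      by (intro tendsto_intros ep_lim)
    then have sq0: "(\<lambda>n. sqrt (16 * (R + 1) * ep n)) \<longlonglongrightarrow> 0" by simp
    have "eventually (\<lambda>n. norm (qq n - pp n) \<le> sqrt (16 * (R + 1) * ep n)) sequentially"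
      using close by simp
    then have "(\<lambda>n. qq n - pp n) \<longlonglongrightarrow> 0" using sq0 by (rule Lim_null_comparison)
    then have "(\<lambda>n. (qq n - pp n) + pp n) \<longlonglongrightarrow> 0 + pb" using pb by (intro tendsto_add)
    then have qlim: "qq \<longlonglongrightarrow> pb" by simp
    have "qq n \<in> cball (cen z e) (rad z e)" for n using qq unfolding K_def by auto
    then have "pb \<in> cball (cen z e) (rad z e)"
      using closed_sequentially[OF closed_cball _ qlim] by blast
    then show "dist (cen z e) pb \<le> rad z e" by simp
  qed
  then show ?thesis using ball_iff by blast
qed

lemma minty_exists:
  fixes A :: "'a::{real_inner, complete_space} \<Rightarrow> 'a set"
  assumes mm: "maximal_monotone A" and g: "g > 0"
  shows "\<exists>p u. u \<in> A p \<and> x = p + g *\<^sub>R u"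
proof -
  have mA: "monotone_op A" using mm unfolding maximal_monotone_def by blast
  define G where "G = {(a, g *\<^sub>R b) | a b. b \<in> A a}"
  have monoG: "\<forall>e\<in>G. \<forall>e'\<in>G. inner (fst e - fst e') (snd e - snd e') \<ge> 0"
  proof (intro ballI)
    fix e e' assume "e \<in> G" "e' \<in> G"
    then obtain a b a' b' where e: "e = (a, g *\<^sub>R b)" "b \<in> A a" and e': "e' = (a', g *\<^sub>R b')" "b' \<in> A a'"
      unfolding G_def by blast
    have "inner (a - a') (b - b') \<ge> 0" using mA e e' unfolding monotone_op_def by blast
    then have "g * inner (a - a') (b - b') \<ge> 0" using g by simp
    then show "inner (fst e - fst e') (snd e - snd e') \<ge> 0"
      using e e' by (simp add: inner_diff_right inner_diff_left algebra_simps)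
  qed
  obtain p where p: "\<forall>e\<in>G. inner (p - fst e) (x - p - snd e) \<ge> 0"
  proof (cases "G = {}")
    case True then show ?thesis using that by blast
  next
    case False then show ?thesis using that monotone_extension_point[OF monoG False, of x] by blast
  qed
  define u0 where "u0 = (1/g) *\<^sub>R (x - p)"
  have rel: "inner (p - a) (u0 - b) \<ge> 0" if "b \<in> A a" for a b
  proof -
    have "(a, g *\<^sub>R b) \<in> G" unfolding G_def using that by blast
    then have "inner (p - a) (x - p - g *\<^sub>R b) \<ge> 0" using p by force
    moreover have "x - p - g *\<^sub>R b = g *\<^sub>R (u0 - b)" unfolding u0_def using g by (simp add: algebra_simps)
    ultimately have "g * inner (p - a) (u0 - b) \<ge> 0" by simp
    then show ?thesis using g by (simp add: zero_le_mult_iff)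
  qed
  define B where "B y = (if y = p then insert u0 (A y) else A y)" for y
  have "monotone_op B"
    unfolding monotone_op_def
  proof (intro allI impI)
    fix y1 y2 v1 v2 assume v1: "v1 \<in> B y1" and v2: "v2 \<in> B y2"
    show "inner (y1 - y2) (v1 - v2) \<ge> 0"
    proof (cases "y1 = p \<and> v1 = u0")
      case True
      show ?thesis
      proof (cases "y2 = p \<and> v2 = u0")
        case True then show ?thesis using \<open>y1 = p \<and> v1 = u0\<close> by simp
      next
        case False
        then have "v2 \<in> A y2" using v2 unfolding B_def by (auto split: if_splits)
        then show ?thesis using rel True by blast
      qed
    next
      case False
      then have a1: "v1 \<in> A y1" using v1 unfolding B_def by (auto split: if_splits)
      show ?thesis
      proof (cases "y2 = p \<and> v2 = u0")
        case True
        have "inner (p - y1) (u0 - v1) \<ge> 0" using rel a1 by blast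
        moreover have "inner (y1 - y2) (v1 - v2) = inner (p - y1) (u0 - v1)"
          using True by (simp add: inner_diff_left inner_diff_right algebra_simps)
        ultimately show ?thesis by simp
      next
        case False
        then have "v2 \<in> A y2" using v2 unfolding B_def by (auto split: if_splits)
        then show ?thesis using a1 mA unfolding monotone_op_def by blast
      qed
    qed
  qed
  moreover have "\<forall>y. A y \<subseteq> B y" unfolding B_def by auto
  ultimately have "B = A" using mm unfolding maximal_monotone_def by blast
  then have "u0 \<in> A p" by (metis B_def insertI1)
  moreover have "x = p + g *\<^sub>R u0" unfolding u0_def using g by simp
  ultimately show ?thesis by blast
qed

lemma res_unique:
  fixes A :: "'a::real_inner \<Rightarrow> 'a set"
  assumes mA: "monotone_op A" and g: "g > 0" and u: "u \<in> A p" and u': "u' \<in> A p'"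
    and eq: "p + g *\<^sub>R u = p' + g *\<^sub>R u'"
  shows "p = p'"
proof -
  have i: "inner (p - p') (u - u') \<ge> 0" using mA u u' unfolding monotone_op_def by blast
  have "p' - p = g *\<^sub>R (u - u')" using eq by (simp add: algebra_simps)
  then have "inner (p - p') (p' - p) = g * inner (p - p') (u - u')" by simp
  then have "inner (p - p') (p' - p) \<ge> 0" using i g by simp
  moreover have "inner (p - p') (p' - p) = - (norm (p - p'))\<^sup>2"
    by (simp add: power2_norm_eq_inner inner_diff_left inner_diff_right inner_commute)
  ultimately have "norm (p - p') = 0" by simp
  then show ?thesis by simp
qed

lemma res_char:
  fixes A :: "'a::{real_inner, complete_space} \<Rightarrow> 'a set"
  assumes mm: "maximal_monotone A" and g: "g > 0"
  shows "\<exists>u\<in>A (resolvent g A x). x = resolvent g A x + g *\<^sub>R u"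
proof -
  have mA: "monotone_op A" using mm unfolding maximal_monotone_def by blast
  obtain p u where pu: "u \<in> A p" "x = p + g *\<^sub>R u" using minty_exists[OF mm g] by blast
  have P: "x \<in> (\<lambda>u. p + g *\<^sub>R u) ` A p" using pu by blast
  have "resolvent g A x = p"
    unfolding resolvent_def
  proof (rule the_equality)
    show "x \<in> (\<lambda>u. p + g *\<^sub>R u) ` A p" by (rule P)
  next
    fix p' assume "x \<in> (\<lambda>u. p' + g *\<^sub>R u) ` A p'"
    then obtain u' where "u' \<in> A p'" "x = p' + g *\<^sub>R u'" by blast
    then show "p' = p" using res_unique[OF mA g] pu by metis
  qed
  then show ?thesis using pu by blast
qed

lemma res_nonexp:
  fixes A :: "'a::{real_inner, complete_space} \<Rightarrow> 'a set"
  assumes mm: "maximal_monotone A" and g: "g > 0"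
  shows "norm (resolvent g A x - resolvent g A y) \<le> norm (x - y)"
proof -
  have mA: "monotone_op A" using mm unfolding maximal_monotone_def by blast
  define p where "p = resolvent g A x"
  define q where "q = resolvent g A y"
  obtain u where u: "u \<in> A p" "x = p + g *\<^sub>R u" using res_char[OF mm g, of x] unfolding p_def by blast
  obtain v where v: "v \<in> A q" "y = q + g *\<^sub>R v" using res_char[OF mm g, of y] unfolding q_def by blast
  have i: "inner (p - q) (u - v) \<ge> 0" using mA u v unfolding monotone_op_def by blast
  have xy: "x - y = (p - q) + g *\<^sub>R (u - v)" using u v by (simp add: algebra_simps)
  have "(norm ((p - q) + g *\<^sub>R (u - v)))\<^sup>2 = (norm (p - q))\<^sup>2 + 2 * g * inner (p - q) (u - v) + g\<^sup>2 * (norm (u - v))\<^sup>2"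
    unfolding power2_norm_eq_inner by (simp add: inner_add_left inner_add_right inner_commute algebra_simps power2_eq_square)
  then have "(norm (x - y))\<^sup>2 = (norm (p - q))\<^sup>2 + 2 * g * inner (p - q) (u - v) + g\<^sup>2 * (norm (u - v))\<^sup>2"
    unfolding xy .
  moreover have "2 * g * inner (p - q) (u - v) \<ge> 0" using i g by simp
  moreover have "g\<^sup>2 * (norm (u - v))\<^sup>2 \<ge> 0" by simp
  ultimately have "(norm (p - q))\<^sup>2 \<le> (norm (x - y))\<^sup>2" by linarith
  then have "norm (p - q) \<le> norm (x - y)" by (rule power2_le_imp_le[OF _ norm_ge_zero])
  then show ?thesis by (simp add: p_def q_def)
qed

lemma sqrt_ge_self:
  fixes t :: real assumes "0 \<le> t" "t \<le> 1" shows "t \<le> sqrt t"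
proof -
  have "sqrt t \<le> 1" using assms by simp
  then have "sqrt t * sqrt t \<le> sqrt t * 1" using assms by (intro mult_left_mono) auto
  then show ?thesis using assms by simp
qed

lemma const_bound:
  fixes d g :: real and N :: nat
  assumes N: "N \<ge> 2" and d: "d > 0" and g: "g > 0"
  shows "d / g + \<bar>1 - d / g\<bar> * sqrt (real N - 1) \<le> sqrt d / sqrt g + sqrt \<bar>g - d\<bar> / sqrt g
                * max (sqrt (real N - 1)) (sqrt (2 * real N) * sqrt (d / g))"
proof -
  define t where "t = d / g"
  define s where "s = sqrt (real N - 1)"
  define mx where "mx = max (sqrt (real N - 1)) (sqrt (2 * real N) * sqrt (d / g))"
  have t0: "t > 0" unfolding t_def using d g by simp
  have h1: "sqrt d / sqrt g = sqrt t" unfolding t_def by (simp add: real_sqrt_divide)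
  have "1 - t = (g - d) / g" unfolding t_def using g by (simp add: field_simps)
  then have "\<bar>g - d\<bar> / g = \<bar>1 - t\<bar>" using g by (simp add: abs_divide)
  then have h2: "sqrt \<bar>g - d\<bar> / sqrt g = sqrt \<bar>1 - t\<bar>" by (metis real_sqrt_divide)
  have s0: "s \<ge> 0" unfolding s_def using N by simp
  have ss: "s\<^sup>2 = real N - 1" unfolding s_def using N by simp
  have smx: "s \<le> mx" unfolding s_def mx_def by simp
  have goal: "t + \<bar>1 - t\<bar> * s \<le> sqrt t + sqrt \<bar>1 - t\<bar> * mx"
  proof (cases "t \<le> 1")
    case True
    have a: "t \<le> sqrt t" using True t0 by (intro sqrt_ge_self) auto
    have b: "\<bar>1 - t\<bar> \<le> sqrt \<bar>1 - t\<bar>" using True t0 by (intro sqrt_ge_self) auto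
    have "\<bar>1 - t\<bar> * s \<le> sqrt \<bar>1 - t\<bar> * mx" using b smx s0 by (intro mult_mono) auto
    then show ?thesis using a by linarith
  next
    case False
    define a where "a = sqrt t"
    define b where "b = sqrt (t - 1)"
    have ab: "\<bar>1 - t\<bar> = t - 1" using False by simp
    have a2: "a\<^sup>2 = t" unfolding a_def using t0 by simp
    have b2: "b\<^sup>2 = t - 1" unfolding b_def using False by simp
    have a1: "a \<ge> 1" unfolding a_def using False by simp
    have b0: "b \<ge> 0" unfolding b_def using False by simp
    have ba: "b \<le> a" unfolding a_def b_def by simp
    have am1: "a - 1 \<le> b"
    proof -
      have "(a - 1)\<^sup>2 \<le> b\<^sup>2" using a2 b2 a1 by (simp add: power2_eq_square algebra_simps)
      then show ?thesis using b0 by (rule power2_le_imp_le)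
    qed
    have s1: "1 + s \<le> sqrt (2 * real N)"
    proof -
      have "0 \<le> (s - 1)\<^sup>2" by simp
      then have "2 * s \<le> s\<^sup>2 + 1" by (simp add: power2_eq_square algebra_simps)
      then have "(1 + s)\<^sup>2 \<le> 2 * real N" using ss by (simp add: power2_eq_square algebra_simps)
      then show ?thesis by (rule real_le_rsqrt)
    qed
    have e1: "a + a * (a - 1) = t" using a2 by (simp add: power2_eq_square algebra_simps)
    have e2: "b * (b * s) = (t - 1) * s" using b2 by (metis mult.assoc power2_eq_square)
    have "t + \<bar>1 - t\<bar> * s = a + a * (a - 1) + b * (b * s)"
      using e1 e2 ab by (simp only:)
    also have "\<dots> \<le> a + a * b + a * (b * s)"
    proof -
      have "a * (a - 1) \<le> a * b" using am1 a1 by (intro mult_left_mono) auto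
      moreover have "b * (b * s) \<le> a * (b * s)" using ba b0 s0 by (intro mult_right_mono) auto
      ultimately show ?thesis by linarith
    qed
    also have "\<dots> = a + b * (a * (1 + s))" by (simp add: algebra_simps)
    also have "\<dots> \<le> a + b * (sqrt (2 * real N) * a)"
    proof -
      have "a * (1 + s) \<le> a * sqrt (2 * real N)" using s1 a1 by (intro mult_left_mono) auto
      then have "b * (a * (1 + s)) \<le> b * (a * sqrt (2 * real N))" using b0 by (rule mult_left_mono)
      then show ?thesis by (simp add: mult_ac)
    qed
    also have "\<dots> \<le> a + b * mx"
    proof -
      have "sqrt (2 * real N) * a \<le> mx" unfolding mx_def a_def t_def by simp
      then show ?thesis using b0 by (simp add: mult_left_mono)
    qed
    finally show ?thesis unfolding a_def b_def using ab by simp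
  qed
  then show ?thesis using h1 h2 unfolding mx_def s_def t_def by simp
qed

theorem lemma5p3:
  fixes A :: "'a::{real_inner, complete_space} \<Rightarrow> 'a set"
    and N :: nat and d g :: real
  assumes "N \<ge> 2" and "maximal_monotone A" and "d > 0" and "g > 0"
  shows "\<forall>x y. prod_norm N (\<lambda>i. Qtilde d g A x i - Qtilde d g A y i)
           \<le> (sqrt d / sqrt g + sqrt \<bar>g - d\<bar> / sqrt g
                * max (sqrt (real N - 1)) (sqrt (2 * real N) * sqrt (d / g)))
             * prod_norm N (\<lambda>i. x i - y i)"
proof (intro allI)
  fix x y :: "nat \<Rightarrow> 'a"
  define t where "t = d / g"
  define J where "J = resolvent g A"
  define u where "u i = x i - y i" for i
  define qd where "qd = J (x 1) - J (y 1)"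
  define I where "I = {1..N-1}"
  have t0: "t > 0" unfolding t_def using assms by simp
  have pn: "prod_norm N f = L2_set (\<lambda>i. norm (f i)) I" for f :: "nat \<Rightarrow> 'a"
    unfolding prod_norm_def L2_set_def I_def ..
  have diff: "(\<lambda>i. Qtilde d g A x i - Qtilde d g A y i) = (\<lambda>i. t *\<^sub>R u i + (1 - t) *\<^sub>R qd)"
  proof
    fix i
    show "Qtilde d g A x i - Qtilde d g A y i = t *\<^sub>R u i + (1 - t) *\<^sub>R qd"
      unfolding Qtilde_def Q1_def t_def u_def qd_def J_def
      by (cases "i = 1") (simp_all add: algebra_simps)
  qed
  define U where "U = L2_set (\<lambda>i. norm (u i)) I"
  have IN: "1 \<in> I" "finite I" unfolding I_def using assms by auto
  have cardI: "real (card I) = real N - 1" unfolding I_def using assms by (simp add: of_nat_diff)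
  have qU: "norm qd \<le> U"
  proof -
    have "norm qd \<le> norm (u 1)" unfolding qd_def J_def u_def using res_nonexp[OF assms(2) assms(4)] .
    also have "\<dots> \<le> U" unfolding U_def using member_le_L2_set[OF IN(2) IN(1)] .
    finally show ?thesis .
  qed
  have "prod_norm N (\<lambda>i. Qtilde d g A x i - Qtilde d g A y i) = L2_set (\<lambda>i. norm (t *\<^sub>R u i + (1 - t) *\<^sub>R qd)) I"
    unfolding diff pn ..
  also have "\<dots> \<le> L2_set (\<lambda>i. t * norm (u i) + \<bar>1 - t\<bar> * norm qd) I"
  proof (rule L2_set_mono)
    fix i
    show "norm (t *\<^sub>R u i + (1 - t) *\<^sub>R qd) \<le> t * norm (u i) + \<bar>1 - t\<bar> * norm qd"
      using norm_triangle_ineq[of "t *\<^sub>R u i" "(1 - t) *\<^sub>R qd"] t0 by simp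
  qed simp
  also have "\<dots> \<le> L2_set (\<lambda>i. t * norm (u i)) I + L2_set (\<lambda>i. \<bar>1 - t\<bar> * norm qd) I"
    by (rule L2_set_triangle_ineq)
  also have "\<dots> = t * U + sqrt (real N - 1) * (\<bar>1 - t\<bar> * norm qd)"
    unfolding U_def using t0 by (simp add: L2_set_right_distrib L2_set_constant cardI)
  also have "\<dots> \<le> t * U + sqrt (real N - 1) * (\<bar>1 - t\<bar> * U)"
    using qU assms(1) by (intro add_left_mono mult_left_mono) auto
  also have "\<dots> = (t + \<bar>1 - t\<bar> * sqrt (real N - 1)) * U" by (simp add: algebra_simps)
  also have "\<dots> \<le> (sqrt d / sqrt g + sqrt \<bar>g - d\<bar> / sqrt g
                * max (sqrt (real N - 1)) (sqrt (2 * real N) * sqrt (d / g))) * U"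
    using const_bound[OF assms(1) assms(3) assms(4)] unfolding t_def U_def
    by (intro mult_right_mono) auto
  also have "U = prod_norm N (\<lambda>i. x i - y i)" unfolding U_def pn u_def ..
  finally show "prod_norm N (\<lambda>i. Qtilde d g A x i - Qtilde d g A y i)
           \<le> (sqrt d / sqrt g + sqrt \<bar>g - d\<bar> / sqrt g
                * max (sqrt (real N - 1)) (sqrt (2 * real N) * sqrt (d / g)))
             * prod_norm N (\<lambda>i. x i - y i)" .
qed
end
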